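(* Let $(X,d)$ be a locally compact noncompact Polish space with compatible metric $d$, let $A$ be a nonzero C*-algebra, and let $Y_n\subseteq X$ ($n\in\mathbb N$) be infinite, compact, pairwise disjoint sets such that no compact subset of $X$ meets infinitely many $Y_n$. Then: (1) for every $f\in\mathbb N^{\mathbb N}$, $D_f$ is a C*-subalgebra of $C_b(X,A)$, and if $A$ is unital then $D_f$ is unital; (2) if $f_1\le^* f_2$ then $C_{f_1}\subseteq C_{f_2}$; (3) $C_b(X,A)=\bigcup_{f\in\mathbb N^{\mathbb N}}D_f$; (4) for every $f\in\mathbb N^{\mathbb N}$ there is $g\in C_b(X,A)$ with $\pi(g)\notin C_f$.
   Context: $\mathbb N^{\mathbb N}$ denotes the set of sequences $f\colon\mathbb N\to\mathbb N$ with $f(n)>0$ for all $n$; $f_1\le^* f_2$ means $f_1(n)\le f_2(n)$ for all but finitely many $n$. $C_b(X,A)$ is the C*-algebra of bounded continuous functions $X\to A$, $C_0(X,A)$ the ideal of those vanishing at infinity, $Q(X,A)=C_b(X,A)/C_0(X,A)$ and $\pi\colon C_b(X,A)\to Q(X,A)$ the quotient map. For $f\in\mathbb N^{\mathbb N}$, $D_f=D_f(X,A,Y_n)=\{g\in C_b(X,A)\mid \forall\epsilon>0\ \exists n_0\ \forall n\ge n_0\ \forall x,y\in Y_n\ (d(x,y)<1/f(n)\Rightarrow\|g(x)-g(y)\|<\epsilon)\}$, and $C_f=\pi(D_f)$. *)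

theory Defs
  imports "HOL-Analysis.Analysis"
begin

text \<open>The real structure comes from the HOL-Analysis classes; complex scalar
  multiplication is an extra operation compatible with it.\<close>

class cstar_algebra = banach + real_normed_algebra +
  fixes scaleC :: "complex \<Rightarrow> 'a \<Rightarrow> 'a"
    and cstar :: "'a \<Rightarrow> 'a"
  assumes scaleC_add_right: "scaleC c (x + y) = scaleC c x + scaleC c y"
    and scaleC_add_left: "scaleC (b + c) x = scaleC b x + scaleC c x"
    and scaleC_scaleC: "scaleC b (scaleC c x) = scaleC (b * c) x"
    and scaleC_one: "scaleC 1 x = x"
    and scaleC_of_real: "scaleC (of_real r) x = scaleR r x"
    and norm_scaleC: "norm (scaleC c x) = cmod c * norm x"
    and mult_scaleC_left: "scaleC c x * y = scaleC c (x * y)"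
    and mult_scaleC_right: "x * scaleC c y = scaleC c (x * y)"
    and cstar_add: "cstar (x + y) = cstar x + cstar y"
    and cstar_scaleC: "cstar (scaleC c x) = scaleC (cnj c) (cstar x)"
    and cstar_mult: "cstar (x * y) = cstar y * cstar x"
    and cstar_cstar: "cstar (cstar x) = x"
    and cstar_identity: "norm (cstar x * x) = norm x ^ 2"

definition unital_alg :: "'a::cstar_algebra itself \<Rightarrow> bool" where
  "unital_alg _ \<longleftrightarrow> (\<exists>u::'a. \<forall>x. u * x = x \<and> x * u = x)"

definition Cb :: "('x::topological_space \<Rightarrow> 'a::cstar_algebra) set" where
  "Cb = {g. continuous_on UNIV g \<and> bounded (range g)}"

definition C0 :: "('x::topological_space \<Rightarrow> 'a::cstar_algebra) set" where
  "C0 = {g. continuous_on UNIV g \<and>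
            (\<forall>e>0. \<exists>K. compact K \<and> (\<forall>x. x \<notin> K \<longrightarrow> norm (g x) < e))}"

text \<open>The quotient map pi : C_b(X,A) -> Q(X,A) = C_b/C_0, an element of Q
  being represented as the coset g + C_0.\<close>
definition piQ :: "('x::topological_space \<Rightarrow> 'a::cstar_algebra) \<Rightarrow> ('x \<Rightarrow> 'a) set" where
  "piQ g = {h \<in> Cb. (\<lambda>x. g x - h x) \<in> C0}"

definition cstar_subalgebra :: "('x::topological_space \<Rightarrow> 'a::cstar_algebra) set \<Rightarrow> bool" where
  "cstar_subalgebra D \<longleftrightarrow> D \<subseteq> Cb \<and> (\<lambda>x. 0) \<in> D \<and>
     (\<forall>g\<in>D. \<forall>h\<in>D. (\<lambda>x. g x + h x) \<in> D) \<and>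
     (\<forall>g\<in>D. \<forall>c. (\<lambda>x. scaleC c (g x)) \<in> D) \<and>
     (\<forall>g\<in>D. \<forall>h\<in>D. (\<lambda>x. g x * h x) \<in> D) \<and>
     (\<forall>g\<in>D. (\<lambda>x. cstar (g x)) \<in> D) \<and>
     (\<forall>g\<in>Cb. (\<forall>e>0. \<exists>h\<in>D. \<forall>x. norm (g x - h x) < e) \<longrightarrow> g \<in> D)"

definition unital_subalgebra :: "('x::topological_space \<Rightarrow> 'a::cstar_algebra) set \<Rightarrow> bool" where
  "unital_subalgebra D \<longleftrightarrow> (\<exists>u::'a. (\<forall>x. u * x = x \<and> x * u = x) \<and> (\<lambda>_. u) \<in> D)"

definition NN :: "(nat \<Rightarrow> nat) set" where
  "NN = {f. \<forall>n. f n > 0}"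

definition eventually_le :: "(nat \<Rightarrow> nat) \<Rightarrow> (nat \<Rightarrow> nat) \<Rightarrow> bool" where
  "eventually_le f1 f2 \<longleftrightarrow> (\<forall>\<^sub>F n in sequentially. f1 n \<le> f2 n)"

text \<open>D_f = D_f(X,A,Y_n), with the metric d = dist of the type.\<close>
definition Df :: "(nat \<Rightarrow> 'x::metric_space set) \<Rightarrow> (nat \<Rightarrow> nat) \<Rightarrow> ('x \<Rightarrow> 'a::cstar_algebra) set" where
  "Df Y f = {g \<in> Cb. \<forall>e>0. \<exists>n0. \<forall>n\<ge>n0. \<forall>x\<in>Y n. \<forall>y\<in>Y n.
              dist x y < 1 / real (f n) \<longrightarrow> norm (g x - g y) < e}"

definition Cf :: "(nat \<Rightarrow> 'x::metric_space set) \<Rightarrow> (nat \<Rightarrow> nat) \<Rightarrow> ('x \<Rightarrow> 'a::cstar_algebra) set set" where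
  "Cf Y f = piQ ` Df Y f"

end

theory Submission
  imports Defs
begin


lemma cstar_zero: "cstar 0 = (0::'a::cstar_algebra)"
  using cstar_add[of 0 0] by simp

lemma cstar_diff: "cstar (x - y) = cstar x - cstar (y::'a::cstar_algebra)"
proof -
  have "cstar x = cstar (x - y) + cstar y" using cstar_add[of "x - y" y] by simp
  then show ?thesis by (simp add: algebra_simps)
qed

lemma norm_cstar_ge: "norm (x::'a::cstar_algebra) \<le> norm (cstar x)"
proof (cases "x = 0")
  case True then show ?thesis by (simp add: cstar_zero)
next
  case False
  then have pos: "norm x > 0" by simp
  have "norm x * norm x = norm (cstar x * x)" using cstar_identity[of x] by (simp add: power2_eq_square)
  also have "\<dots> \<le> norm (cstar x) * norm x" by (rule norm_mult_ineq)
  finally show ?thesis using pos by simp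
qed

lemma norm_cstar: "norm (cstar x) = norm (x::'a::cstar_algebra)"
  using norm_cstar_ge[of x] norm_cstar_ge[of "cstar x"] by (simp add: cstar_cstar)

lemma bounded_linear_cstar: "bounded_linear (cstar::'a::cstar_algebra\<Rightarrow>'a)"
proof (rule bounded_linear_intro[where K=1])
  fix x y show "cstar (x + y) = cstar x + cstar y" by (rule cstar_add)
next
  fix r x
  have "cstar (scaleR r x) = cstar (scaleC (of_real r) x)" by (simp add: scaleC_of_real)
  also have "\<dots> = scaleC (of_real r) (cstar x)" by (simp add: cstar_scaleC)
  finally show "cstar (scaleR r x) = scaleR r (cstar x)" by (simp add: scaleC_of_real)
next
  fix x show "norm (cstar x) \<le> norm x * 1" by (simp add: norm_cstar)
qed

lemma bounded_linear_scaleC: "bounded_linear (scaleC c::'a::cstar_algebra\<Rightarrow>'a)"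
proof (rule bounded_linear_intro[where K="cmod c"])
  fix x y show "scaleC c (x + y) = scaleC c x + scaleC c y" by (rule scaleC_add_right)
next
  fix r x
  have "scaleC c (scaleR r x) = scaleC c (scaleC (of_real r) x)" by (simp add: scaleC_of_real)
  also have "\<dots> = scaleC (of_real r) (scaleC c x)" by (simp add: scaleC_scaleC mult.commute)
  finally show "scaleC c (scaleR r x) = scaleR r (scaleC c x)" by (simp add: scaleC_of_real)
next
  fix x show "norm (scaleC c x) \<le> norm x * cmod c" by (simp add: norm_scaleC mult.commute)
qed

lemma scaleC_diff: "scaleC c (x - y) = scaleC c x - scaleC c (y::'a::cstar_algebra)"
  using linear_diff[OF bounded_linear.linear[OF bounded_linear_scaleC]] by blast

lemma norm3: "norm (u + v + w) \<le> norm u + norm v + norm (w::'b::real_normed_vector)"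
  using norm_triangle_ineq[of "u + v" w] norm_triangle_ineq[of u v] by linarith

lemma Cb_iff: "g \<in> Cb \<longleftrightarrow> continuous_on UNIV g \<and> (\<exists>B. \<forall>x. norm (g x) \<le> B)"
  by (simp add: Cb_def bounded_iff)

lemma Cb_bound: assumes "g \<in> Cb" obtains B where "B > 0" "\<And>x. norm (g x) \<le> B"
proof -
  obtain B where "\<And>x. norm (g x) \<le> B" using assms Cb_iff by blast
  then show ?thesis by (intro that[of "\<bar>B\<bar> + 1"]) (auto intro: order_trans[OF _ abs_ge_self] | smt (verit))+
qed

lemma DfI:
  assumes "g \<in> Cb"
    and "\<And>e. e > 0 \<Longrightarrow> \<exists>n0. \<forall>n\<ge>n0. \<forall>x\<in>Y n. \<forall>y\<in>Y n.
              dist x y < 1 / real (f n) \<longrightarrow> norm (g x - g y) < e"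
  shows "g \<in> Df Y f"
  using assms unfolding Df_def by blast

lemma DfD:
  assumes "g \<in> Df Y f" "e > 0"
  obtains n0 where "\<And>n x y. n \<ge> n0 \<Longrightarrow> x \<in> Y n \<Longrightarrow> y \<in> Y n \<Longrightarrow>
              dist x y < 1 / real (f n) \<Longrightarrow> norm (g x - g y) < e"
  using assms unfolding Df_def by blast

lemma Df_Cb: "g \<in> Df Y f \<Longrightarrow> g \<in> Cb"
  unfolding Df_def by blast

lemma Df_zero: "(\<lambda>x. 0) \<in> Df Y f"
  by (rule DfI) (auto simp: Cb_iff)

lemma Df_const: "(\<lambda>x. c) \<in> Df Y f"
  by (rule DfI) (auto simp: Cb_iff)

lemma Df_add:
  assumes g: "g \<in> Df Y f" and h: "h \<in> Df Y f"
  shows "(\<lambda>x. g x + h x) \<in> Df Y f"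
proof (rule DfI)
  obtain B1 where B1: "\<And>x. norm (g x) \<le> B1" using Cb_bound[OF Df_Cb[OF g]] by blast
  obtain B2 where B2: "\<And>x. norm (h x) \<le> B2" using Cb_bound[OF Df_Cb[OF h]] by blast
  have "norm (g x + h x) \<le> B1 + B2" for x
    using norm_triangle_ineq[of "g x" "h x"] B1[of x] B2[of x] by linarith
  then show "(\<lambda>x. g x + h x) \<in> Cb"
    using Df_Cb[OF g] Df_Cb[OF h] by (auto simp: Cb_iff intro!: continuous_on_add)
next
  fix e :: real assume e: "e > 0"
  obtain n1 where n1: "\<And>n x y. n \<ge> n1 \<Longrightarrow> x \<in> Y n \<Longrightarrow> y \<in> Y n \<Longrightarrow>
              dist x y < 1 / real (f n) \<Longrightarrow> norm (g x - g y) < e/2" using DfD[OF g, of "e/2"] e by auto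
  obtain n2 where n2: "\<And>n x y. n \<ge> n2 \<Longrightarrow> x \<in> Y n \<Longrightarrow> y \<in> Y n \<Longrightarrow>
              dist x y < 1 / real (f n) \<Longrightarrow> norm (h x - h y) < e/2" using DfD[OF h, of "e/2"] e by auto
  show "\<exists>n0. \<forall>n\<ge>n0. \<forall>x\<in>Y n. \<forall>y\<in>Y n.
              dist x y < 1 / real (f n) \<longrightarrow> norm ((g x + h x) - (g y + h y)) < e"
  proof (intro exI[of _ "max n1 n2"] allI impI ballI)
    fix n x y assume "max n1 n2 \<le> n" "x \<in> Y n" "y \<in> Y n" "dist x y < 1 / real (f n)"
    then have a: "norm (g x - g y) < e/2" and b: "norm (h x - h y) < e/2" using n1 n2 by auto
    have "(g x + h x) - (g y + h y) = (g x - g y) + (h x - h y)" by (simp add: algebra_simps)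
    then have "norm ((g x + h x) - (g y + h y)) = norm ((g x - g y) + (h x - h y))" by (rule arg_cong)
    then have "norm ((g x + h x) - (g y + h y)) \<le> norm (g x - g y) + norm (h x - h y)"
      using norm_triangle_ineq[of "g x - g y" "h x - h y"] by linarith
    then show "norm ((g x + h x) - (g y + h y)) < e" using a b by linarith
  qed
qed


lemma Df_lin:
  fixes L :: "'a::cstar_algebra \<Rightarrow> 'a"
  assumes g: "g \<in> Df Y f" and L: "bounded_linear L"
  shows "(\<lambda>x. L (g x)) \<in> Df Y f"
proof (rule DfI)
  interpret L: bounded_linear L by (rule L)
  obtain K where K: "K > 0" "\<And>x. norm (L x) \<le> norm x * K" using L.pos_bounded by blast
  obtain B1 where B1: "\<And>x. norm (g x) \<le> B1" using Cb_bound[OF Df_Cb[OF g]] by blast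
  have "norm (L (g x)) \<le> B1 * K" for x
    using K(2)[of "g x"] B1[of x] K(1) by (meson order_trans mult_right_mono less_imp_le)
  then show "(\<lambda>x. L (g x)) \<in> Cb"
    using Df_Cb[OF g] by (auto simp: Cb_iff intro!: L.continuous_on)
next
  interpret L: bounded_linear L by (rule L)
  obtain K where K: "K > 0" "\<And>x. norm (L x) \<le> norm x * K" using L.pos_bounded by blast
  fix e :: real assume e: "e > 0"
  obtain n1 where n1: "\<And>n x y. n \<ge> n1 \<Longrightarrow> x \<in> Y n \<Longrightarrow> y \<in> Y n \<Longrightarrow>
              dist x y < 1 / real (f n) \<Longrightarrow> norm (g x - g y) < e/K" using DfD[OF g, of "e/K"] e K by auto
  show "\<exists>n0. \<forall>n\<ge>n0. \<forall>x\<in>Y n. \<forall>y\<in>Y n.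
              dist x y < 1 / real (f n) \<longrightarrow> norm (L (g x) - L (g y)) < e"
  proof (intro exI[of _ n1] allI impI ballI)
    fix n x y assume "n1 \<le> n" "x \<in> Y n" "y \<in> Y n" "dist x y < 1 / real (f n)"
    then have a: "norm (g x - g y) < e/K" using n1 by auto
    have "norm (L (g x) - L (g y)) = norm (L (g x - g y))" by (simp add: L.diff)
    also have "\<dots> \<le> norm (g x - g y) * K" by (rule K(2))
    also have "\<dots> < e" using a K(1) by (simp add: pos_less_divide_eq)
    finally show "norm (L (g x) - L (g y)) < e" .
  qed
qed

lemma Df_mult:
  fixes g h :: "'x::metric_space \<Rightarrow> 'a::cstar_algebra"
  assumes g: "g \<in> Df Y f" and h: "h \<in> Df Y f"
  shows "(\<lambda>x. g x * h x) \<in> Df Y f"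
proof (rule DfI)
  obtain B1 where B1: "B1 > 0" "\<And>x. norm (g x) \<le> B1" using Cb_bound[OF Df_Cb[OF g]] by blast
  obtain B2 where B2: "B2 > 0" "\<And>x. norm (h x) \<le> B2" using Cb_bound[OF Df_Cb[OF h]] by blast
  have "norm (g x * h x) \<le> B1 * B2" for x
    using norm_mult_ineq[of "g x" "h x"] B1(2)[of x] B2(2)[of x]
    by (meson norm_ge_zero order_trans mult_mono)
  then show "(\<lambda>x. g x * h x) \<in> Cb"
    using Df_Cb[OF g] Df_Cb[OF h] by (auto simp: Cb_iff intro!: continuous_on_mult)
  define B where "B = B1 + B2"
  have Bp: "B > 0" using B1 B2 by (simp add: B_def)
  fix e :: real assume e: "e > 0"
  define e' where "e' = e / (2 * B)"
  have e'p: "e' > 0" using e Bp by (simp add: e'_def)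
  obtain n1 where n1: "\<And>n x y. n \<ge> n1 \<Longrightarrow> x \<in> Y n \<Longrightarrow> y \<in> Y n \<Longrightarrow>
              dist x y < 1 / real (f n) \<Longrightarrow> norm (g x - g y) < e'" using DfD[OF g e'p] by auto
  obtain n2 where n2: "\<And>n x y. n \<ge> n2 \<Longrightarrow> x \<in> Y n \<Longrightarrow> y \<in> Y n \<Longrightarrow>
              dist x y < 1 / real (f n) \<Longrightarrow> norm (h x - h y) < e'" using DfD[OF h e'p] by auto
  show "\<exists>n0. \<forall>n\<ge>n0. \<forall>x\<in>Y n. \<forall>y\<in>Y n.
              dist x y < 1 / real (f n) \<longrightarrow> norm (g x * h x - g y * h y) < e"
  proof (intro exI[of _ "max n1 n2"] allI impI ballI)
    fix n x y assume "max n1 n2 \<le> n" "x \<in> Y n" "y \<in> Y n" "dist x y < 1 / real (f n)"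
    then have a: "norm (g x - g y) < e'" and b: "norm (h x - h y) < e'" using n1 n2 by auto
    have "g x * h x - g y * h y = g x * (h x - h y) + (g x - g y) * h y" by (simp add: algebra_simps)
    then have "norm (g x * h x - g y * h y) = norm (g x * (h x - h y) + (g x - g y) * h y)" by (rule arg_cong)
    then have "norm (g x * h x - g y * h y) \<le> norm (g x * (h x - h y)) + norm ((g x - g y) * h y)"
      using norm_triangle_ineq[of "g x * (h x - h y)" "(g x - g y) * h y"] by linarith
    also have "\<dots> \<le> norm (g x) * norm (h x - h y) + norm (g x - g y) * norm (h y)"
      by (intro add_mono norm_mult_ineq)
    also have "\<dots> \<le> B1 * e' + e' * B2"
      using a b B1 B2 e'p by (intro add_mono mult_mono) auto
    also have "\<dots> = B * e'" by (metis B_def distrib_right mult.commute)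
    also have "\<dots> = e / 2" using Bp unfolding e'_def by (simp add: field_simps)
    finally show "norm (g x * h x - g y * h y) < e" using e by linarith
  qed
qed

lemma Df_closed:
  fixes g :: "'x::metric_space \<Rightarrow> 'a::cstar_algebra"
  assumes g: "g \<in> Cb" and appr: "\<forall>e>0. \<exists>h\<in>Df Y f. \<forall>x. norm (g x - h x) < e"
  shows "g \<in> Df Y f"
proof (rule DfI[OF g])
  fix e :: real assume e: "e > 0"
  obtain h where h: "h \<in> Df Y f" "\<And>x. norm (g x - h x) < e/3" using appr e
    by (meson divide_pos_pos zero_less_numeral)
  obtain n1 where n1: "\<And>n x y. n \<ge> n1 \<Longrightarrow> x \<in> Y n \<Longrightarrow> y \<in> Y n \<Longrightarrow>
              dist x y < 1 / real (f n) \<Longrightarrow> norm (h x - h y) < e/3" using DfD[OF h(1), of "e/3"] e by auto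
  show "\<exists>n0. \<forall>n\<ge>n0. \<forall>x\<in>Y n. \<forall>y\<in>Y n.
              dist x y < 1 / real (f n) \<longrightarrow> norm (g x - g y) < e"
  proof (intro exI[of _ n1] allI impI ballI)
    fix n x y assume "n1 \<le> n" "x \<in> Y n" "y \<in> Y n" "dist x y < 1 / real (f n)"
    then have a: "norm (h x - h y) < e/3" using n1 by auto
    have "g x - g y = (g x - h x) + (h x - h y) + (h y - g y)" by (simp add: algebra_simps)
    then have "norm (g x - g y) = norm ((g x - h x) + (h x - h y) + (h y - g y))" by (rule arg_cong)
    then have "norm (g x - g y) \<le> norm (g x - h x) + norm (h x - h y) + norm (h y - g y)"
      using norm3[of "g x - h x" "h x - h y" "h y - g y"] by linarith
    moreover have "norm (h y - g y) < e/3" using h(2)[of y] by (simp add: norm_minus_commute)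
    ultimately show "norm (g x - g y) < e" using a h(2)[of x] by linarith
  qed
qed

lemma Df_mono:
  assumes f1: "f1 \<in> NN" and ev: "eventually_le f1 f2" and g: "g \<in> Df Y f1"
  shows "g \<in> Df Y f2"
proof (rule DfI[OF Df_Cb[OF g]])
  fix e :: real assume e: "e > 0"
  obtain N where N: "\<And>n. n \<ge> N \<Longrightarrow> f1 n \<le> f2 n" using ev unfolding eventually_le_def eventually_sequentially by blast
  obtain n1 where n1: "\<And>n x y. n \<ge> n1 \<Longrightarrow> x \<in> Y n \<Longrightarrow> y \<in> Y n \<Longrightarrow>
              dist x y < 1 / real (f1 n) \<Longrightarrow> norm (g x - g y) < e" using DfD[OF g e] by auto
  show "\<exists>n0. \<forall>n\<ge>n0. \<forall>x\<in>Y n. \<forall>y\<in>Y n.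
              dist x y < 1 / real (f2 n) \<longrightarrow> norm (g x - g y) < e"
  proof (intro exI[of _ "max n1 N"] allI impI ballI)
    fix n x y assume "max n1 N \<le> n" "x \<in> Y n" "y \<in> Y n" "dist x y < 1 / real (f2 n)"
    moreover have "1 / real (f2 n) \<le> 1 / real (f1 n)" if "n \<ge> N"
      using N[OF that] f1 unfolding NN_def by (simp add: frac_le)
    ultimately show "norm (g x - g y) < e" using n1 by (meson max.boundedE order_less_le_trans)
  qed
qed

lemma Cb_Df:
  fixes g :: "'x::metric_space \<Rightarrow> 'a::cstar_algebra"
  assumes g: "g \<in> Cb" and Yc: "\<And>n. compact (Y n)"
  shows "\<exists>f\<in>NN. g \<in> Df Y f"
proof -
  have "\<exists>d>0. \<forall>x\<in>Y n. \<forall>y\<in>Y n. dist x y < d \<longrightarrow> norm (g x - g y) < inverse (real (Suc n))" for n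
  proof -
    have "uniformly_continuous_on (Y n) g"
      using g Yc[of n] unfolding Cb_iff by (metis compact_uniformly_continuous continuous_on_subset subset_UNIV)
    then show ?thesis unfolding uniformly_continuous_on_def dist_norm[symmetric]
      by (metis of_nat_0_less_iff positive_imp_inverse_positive zero_less_Suc dist_commute)
  qed
  then obtain d where d: "\<And>n. d n > 0" "\<And>n x y. x\<in>Y n \<Longrightarrow> y\<in>Y n \<Longrightarrow> dist x y < d n \<Longrightarrow> norm (g x - g y) < inverse (real (Suc n))"
    by metis
  define f where "f n = nat (ceiling (1 / d n)) + 1" for n
  have fNN: "f \<in> NN" by (simp add: f_def NN_def)
  have fle: "1 / real (f n) \<le> d n" for n
  proof -
    have "1 / d n \<le> real (f n)" unfolding f_def by linarith
    moreover have "real (f n) > 0" by (simp add: f_def)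
    ultimately show ?thesis using d(1)[of n] by (simp add: field_simps)
  qed
  have "g \<in> Df Y f"
  proof (rule DfI[OF g])
    fix e :: real assume e: "e > 0"
    obtain n0 where n0: "inverse (real (Suc n0)) < e" using reals_Archimedean[OF e] by blast
    show "\<exists>n0. \<forall>n\<ge>n0. \<forall>x\<in>Y n. \<forall>y\<in>Y n.
              dist x y < 1 / real (f n) \<longrightarrow> norm (g x - g y) < e"
    proof (intro exI[of _ n0] allI impI ballI)
      fix n x y assume "n0 \<le> n" "x \<in> Y n" "y \<in> Y n" "dist x y < 1 / real (f n)"
      then have "norm (g x - g y) < inverse (real (Suc n))" using d(2) fle[of n] by force
      moreover have "inverse (real (Suc n)) \<le> inverse (real (Suc n0))" using \<open>n0 \<le> n\<close>
        by (simp add: le_imp_inverse_le)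
      ultimately show "norm (g x - g y) < e" using n0 by linarith
    qed
  qed
  then show ?thesis using fNN by blast
qed


lemma closed_sparse:
  fixes Y :: "nat \<Rightarrow> 'x::metric_space set" and S :: "'x set"
  assumes lc: "locally_compact_space (euclidean :: 'x topology)"
    and Y_loc_fin: "\<And>K. compact K \<Longrightarrow> finite {n. Y n \<inter> K \<noteq> {}}"
    and fin: "\<And>n. finite (S \<inter> Y n)" and sub: "S \<subseteq> (\<Union>n. Y n)"
  shows "closed S"
proof -
  have "z \<in> S" if z: "z \<in> closure S" for z
  proof -
    obtain U K where UK: "open U" "compact K" "z \<in> U" "U \<subseteq> K"
      using lc unfolding locally_compact_space_def by simp meson
    have "S \<inter> K \<subseteq> (\<Union>n\<in>{n. Y n \<inter> K \<noteq> {}}. S \<inter> Y n)" using sub by blast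
    moreover have "finite (\<Union>n\<in>{n. Y n \<inter> K \<noteq> {}}. S \<inter> Y n)"
      using Y_loc_fin[OF UK(2)] fin by blast
    ultimately have finSK: "finite (S \<inter> K)" by (rule finite_subset)
    have "z \<in> closure (U \<inter> S)" using open_Int_closure_subset[OF UK(1)] z UK(3) by blast
    also have "\<dots> \<subseteq> closure (S \<inter> K)" using UK(4) by (intro closure_mono) blast
    also have "\<dots> = S \<inter> K" using finSK by (simp add: finite_imp_closed)
    finally show ?thesis by blast
  qed
  then show ?thesis using closure_subset_eq by blast
qed

lemma part4:
  fixes Y :: "nat \<Rightarrow> 'x::metric_space set" and f :: "nat \<Rightarrow> nat"
  assumes lc: "locally_compact_space (euclidean :: 'x topology)"
    and nonzero: "\<exists>a::'a::cstar_algebra. a \<noteq> 0"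
    and Y_inf: "\<And>n. infinite (Y n)"
    and Y_compact: "\<And>n. compact (Y n)"
    and Y_disj: "\<And>m n. m \<noteq> n \<Longrightarrow> Y m \<inter> Y n = {}"
    and Y_loc_fin: "\<And>K. compact K \<Longrightarrow> finite {n. Y n \<inter> K \<noteq> {}}"
    and fNN: "f \<in> NN"
  shows "\<exists>g\<in>(Cb :: ('x \<Rightarrow> 'a) set). piQ g \<notin> Cf Y f"
proof -
  obtain a :: 'a where a: "a \<noteq> 0" using nonzero by blast
  have "\<exists>p q. p \<in> Y n \<and> q \<in> Y n \<and> p \<noteq> q \<and> dist p q < 1 / real (f n)" for n
  proof -
    obtain z where z: "z \<in> Y n" "z islimpt Y n"
      using Heine_Borel_imp_Bolzano_Weierstrass[OF Y_compact Y_inf subset_refl] by blast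
    have "1 / real (f n) > 0" using fNN by (simp add: NN_def)
    then obtain w where "w \<in> Y n" "w \<noteq> z" "dist w z < 1 / real (f n)"
      using z(2) unfolding islimpt_approachable by blast
    then show ?thesis using z(1) by (metis dist_commute)
  qed
  then obtain p q where pq: "\<And>n. p n \<in> Y n" "\<And>n. q n \<in> Y n" "\<And>n. p n \<noteq> q n"
     "\<And>n. dist (p n) (q n) < 1 / real (f n)" by metis
  have pin: "p m \<in> Y n \<Longrightarrow> m = n" for m n using pq(1)[of m] Y_disj[of m n] by blast
  have qin: "q m \<in> Y n \<Longrightarrow> m = n" for m n using pq(2)[of m] Y_disj[of m n] by blast
  define P where "P = range p"
  define Q where "Q = range q"
  have clP: "closed P"
  proof (rule closed_sparse[OF lc Y_loc_fin])
    fix n show "finite (P \<inter> Y n)"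
      by (rule finite_subset[of _ "{p n}"]) (auto simp: P_def dest: pin)
  qed (use pq in \<open>auto simp: P_def\<close>)
  have clQ: "closed Q"
  proof (rule closed_sparse[OF lc Y_loc_fin])
    fix n show "finite (Q \<inter> Y n)"
      by (rule finite_subset[of _ "{q n}"]) (auto simp: Q_def dest: qin)
  qed (use pq in \<open>auto simp: Q_def\<close>)
  have pq_ne: "p m \<noteq> q n" for m n
  proof
    assume eq: "p m = q n"
    then have "p m \<in> Y n" using pq(2)[of n] by simp
    then have "m = n" by (rule pin)
    then show False using eq pq(3)[of n] by simp
  qed
  have disj: "P \<inter> Q = {}" unfolding P_def Q_def using pq_ne by auto
  have Pne: "P \<noteq> {}" and Qne: "Q \<noteq> {}" by (auto simp: P_def Q_def)
  define \<phi> where "\<phi> z = setdist {z} Q / (setdist {z} P + setdist {z} Q)" for z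
  have den: "setdist {z} P + setdist {z} Q > 0" for z
  proof -
    have "\<not> (setdist {z} P = 0 \<and> setdist {z} Q = 0)"
      using setdist_eq_0_closed[OF clP] setdist_eq_0_closed[OF clQ] Pne Qne disj by blast
    then show ?thesis using setdist_pos_le[of "{z}" P] setdist_pos_le[of "{z}" Q] by linarith
  qed
  have phi01: "0 \<le> \<phi> z \<and> \<phi> z \<le> 1" for z
    using den[of z] by (simp add: \<phi>_def divide_le_eq_1)
  have phiP: "\<phi> (p n) = 1" for n
  proof -
    have "setdist {p n} P = 0" by (simp add: P_def setdist_sing_in_set)
    then show ?thesis using den[of "p n"] by (simp add: \<phi>_def)
  qed
  have phiQ: "\<phi> (q n) = 0" for n
    by (simp add: \<phi>_def Q_def setdist_sing_in_set)
  define g :: "'x \<Rightarrow> 'a" where "g z = \<phi> z *\<^sub>R a" for z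
  have contphi: "continuous_on UNIV \<phi>"
  proof -
    have "\<And>z. setdist {z} P + setdist {z} Q \<noteq> 0" using den by (metis less_irrefl)
    then show ?thesis unfolding \<phi>_def by (intro continuous_intros) auto
  qed
  have gCb: "g \<in> Cb"
  proof -
    have "norm (g z) \<le> norm a" for z using phi01[of z] by (simp add: g_def mult_left_le_one_le)
    then show ?thesis unfolding Cb_iff g_def using contphi by (auto intro!: continuous_intros)
  qed
  have gp: "g (p n) = a" and gq: "g (q n) = 0" for n by (simp_all add: g_def phiP phiQ)
  have "piQ g \<notin> Cf Y f"
  proof
    assume "piQ g \<in> Cf Y f"
    then obtain h where h: "h \<in> Df Y f" "piQ g = piQ h" unfolding Cf_def by blast
    have "g \<in> piQ g" using gCb unfolding piQ_def C0_def by auto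
    then have hg: "(\<lambda>x. h x - g x) \<in> C0" using h(2) unfolding piQ_def by auto
    define e where "e = norm a / 3"
    have e: "e > 0" using a by (simp add: e_def)
    obtain n0 where n0: "\<And>n x y. n \<ge> n0 \<Longrightarrow> x \<in> Y n \<Longrightarrow> y \<in> Y n \<Longrightarrow>
              dist x y < 1 / real (f n) \<Longrightarrow> norm (h x - h y) < e" using DfD[OF h(1) e] by auto
    obtain K where K: "compact K" "\<And>x. x \<notin> K \<Longrightarrow> norm (h x - g x) < e"
      using hg e unfolding C0_def by blast
    have "finite ({..<n0} \<union> {n. Y n \<inter> K \<noteq> {}})" using Y_loc_fin[OF K(1)] by simp
    then obtain n where n: "n \<notin> {..<n0} \<union> {n. Y n \<inter> K \<noteq> {}}"
      using ex_new_if_finite[OF infinite_UNIV_nat] by blast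
    then have nn0: "n \<ge> n0" and pK: "p n \<notin> K" and qK: "q n \<notin> K" using pq(1,2)[of n] by auto
    have 1: "norm (h (p n) - h (q n)) < e" using n0[OF nn0 pq(1) pq(2) pq(4)] .
    have 2: "norm (g (p n) - h (p n)) < e" using K(2)[OF pK] by (simp add: norm_minus_commute)
    have 3: "norm (h (q n) - g (q n)) < e" using K(2)[OF qK] .
    have "a = (g (p n) - h (p n)) + (h (p n) - h (q n)) + (h (q n) - g (q n))"
      by (simp add: gp gq)
    then have "norm a = norm ((g (p n) - h (p n)) + (h (p n) - h (q n)) + (h (q n) - g (q n)))" by (rule arg_cong)
    then have "norm a \<le> norm (g (p n) - h (p n)) + norm (h (p n) - h (q n)) + norm (h (q n) - g (q n))"
      using norm3[of "g (p n) - h (p n)" "h (p n) - h (q n)" "h (q n) - g (q n)"] by linarith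
    then show False using 1 2 3 by (simp add: e_def)
  qed
  then show ?thesis using gCb by blast
qed



theorem proposition2p3:
  fixes Y :: "nat \<Rightarrow> 'x::metric_space set"
  assumes polish: "completely_metrizable_space (euclidean :: 'x topology)"
                  "separable_space (euclidean :: 'x topology)"
    and lc: "locally_compact_space (euclidean :: 'x topology)"
    and noncompact: "\<not> compact (UNIV :: 'x set)"
    and nonzero: "\<exists>a::'a::cstar_algebra. a \<noteq> 0"
    and Y_inf: "\<And>n. infinite (Y n)"
    and Y_compact: "\<And>n. compact (Y n)"
    and Y_disj: "\<And>m n. m \<noteq> n \<Longrightarrow> Y m \<inter> Y n = {}"
    and Y_loc_fin: "\<And>K. compact K \<Longrightarrow> finite {n. Y n \<inter> K \<noteq> {}}"
  shows "(\<forall>f\<in>NN. cstar_subalgebra (Df Y f :: ('x \<Rightarrow> 'a) set) \<and>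
            (unital_alg TYPE('a) \<longrightarrow> unital_subalgebra (Df Y f :: ('x \<Rightarrow> 'a) set)))
       \<and> (\<forall>f1\<in>NN. \<forall>f2\<in>NN. eventually_le f1 f2 \<longrightarrow>
            (Cf Y f1 :: ('x \<Rightarrow> 'a) set set) \<subseteq> Cf Y f2)
       \<and> (Cb :: ('x \<Rightarrow> 'a) set) = (\<Union>f\<in>NN. Df Y f)
       \<and> (\<forall>f\<in>NN. \<exists>g\<in>(Cb :: ('x \<Rightarrow> 'a) set). piQ g \<notin> Cf Y f)"
proof (intro conjI ballI impI)
  fix f assume "f \<in> NN"
  show "cstar_subalgebra (Df Y f :: ('x \<Rightarrow> 'a) set)"
    unfolding cstar_subalgebra_def
  proof (intro conjI ballI allI impI subsetI)
    show "g \<in> Cb" if "g \<in> Df Y f" for g :: "'x \<Rightarrow> 'a" using that by (rule Df_Cb)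
    show "(\<lambda>x. 0) \<in> (Df Y f :: ('x \<Rightarrow> 'a) set)" by (rule Df_zero)
    show "(\<lambda>x. g x + h x) \<in> Df Y f" if "g \<in> Df Y f" "h \<in> Df Y f" for g h :: "'x \<Rightarrow> 'a"
      using that by (rule Df_add)
    show "(\<lambda>x. scaleC c (g x)) \<in> Df Y f" if "g \<in> Df Y f" for g :: "'x \<Rightarrow> 'a" and c
      using that bounded_linear_scaleC by (rule Df_lin)
    show "(\<lambda>x. g x * h x) \<in> Df Y f" if "g \<in> Df Y f" "h \<in> Df Y f" for g h :: "'x \<Rightarrow> 'a"
      using that by (rule Df_mult)
    show "(\<lambda>x. cstar (g x)) \<in> Df Y f" if "g \<in> Df Y f" for g :: "'x \<Rightarrow> 'a"
      using that bounded_linear_cstar by (rule Df_lin)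
    show "g \<in> Df Y f" if "g \<in> Cb" "\<forall>e>0. \<exists>h\<in>Df Y f. \<forall>x. norm (g x - h x) < e" for g :: "'x \<Rightarrow> 'a"
      using that by (rule Df_closed)
  qed
next
  fix f assume "f \<in> NN" "unital_alg TYPE('a)"
  then obtain u :: 'a where "\<forall>x. u * x = x \<and> x * u = x" unfolding unital_alg_def by blast
  then show "unital_subalgebra (Df Y f :: ('x \<Rightarrow> 'a) set)"
    unfolding unital_subalgebra_def using Df_const by blast
next
  fix f1 f2 assume f: "f1 \<in> NN" "f2 \<in> NN" "eventually_le f1 f2"
  show "(Cf Y f1 :: ('x \<Rightarrow> 'a) set set) \<subseteq> Cf Y f2"
  proof
    fix X assume "X \<in> (Cf Y f1 :: ('x \<Rightarrow> 'a) set set)"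
    then obtain g :: "'x \<Rightarrow> 'a" where g: "g \<in> Df Y f1" "X = piQ g" unfolding Cf_def by blast
    have "g \<in> Df Y f2" using Df_mono[OF f(1) f(3) g(1)] .
    then show "X \<in> Cf Y f2" unfolding Cf_def g(2) by (rule imageI)
  qed
next
  show "(Cb :: ('x \<Rightarrow> 'a) set) = (\<Union>f\<in>NN. Df Y f)"
  proof
    show "(Cb :: ('x \<Rightarrow> 'a) set) \<subseteq> (\<Union>f\<in>NN. Df Y f)"
    proof
      fix g :: "'x \<Rightarrow> 'a" assume "g \<in> Cb"
      from Cb_Df[of g Y, OF this Y_compact] obtain f where "f \<in> NN" "g \<in> Df Y f" by (elim bexE)
      then show "g \<in> (\<Union>f\<in>NN. Df Y f)" by blast
    qed
    show "(\<Union>f\<in>NN. Df Y f) \<subseteq> (Cb :: ('x \<Rightarrow> 'a) set)"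
    proof
      fix g :: "'x \<Rightarrow> 'a" assume "g \<in> (\<Union>f\<in>NN. Df Y f)"
      then obtain f where "g \<in> Df Y f" by (elim UN_E)
      then show "g \<in> Cb" by (rule Df_Cb)
    qed
  qed
next
  fix f assume "f \<in> NN"
  then show "\<exists>g\<in>(Cb :: ('x \<Rightarrow> 'a) set). piQ g \<notin> Cf Y f"
    by (intro part4[where Y=Y] lc nonzero Y_inf Y_compact Y_disj Y_loc_fin)
qed

end
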